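(* In the setting of the context, the enclosure $W_\Omega(T)\subset\overline{\mathbb{C}}$ has the following properties: (i) $W_\Omega(T)$ is symmetric with respect to the imaginary axis; (ii) $0\in W_\Omega(T)$ if and only if $0\in\overline{W(A)}$ or $c=0$; (iii) $\delta_+\in W_\Omega(T)$ if and only if $W(A)$ is unbounded or $0\in\overline{W(B)}$ or $c=0$; (iv) $\delta_-\in W_\Omega(T)$ if and only if $W(A)$ is unbounded or $0\in\overline{W(B)}$; (v) $\infty\in W_\Omega(T)$ if and only if $W(A)$ is unbounded.
   Context: Let $\mathcal{H}$ be a Hilbert space, $A$ a selfadjoint (possibly unbounded) operator in $\mathcal{H}$ and $B$ a nonzero bounded selfadjoint operator. Let $c\ge0$, $d>0$, $\theta:=\sqrt{c-d^2/4}$ (principal square root), $\delta_\pm:=\pm\theta-id/2$. $W(A),W(B)\subset\mathbb{R}$ are the numerical ranges. For real $\alpha,\beta$ let $p_{(\alpha,\beta)}(\omega):=(\alpha-\omega^2)(c-id\omega-\omega^2)-\beta\omega^2$, with roots $r_1,\dots,r_4$ labelled continuously in $(\alpha,\beta)\in\mathbb{R}^2$ and extended by limits to $\overline{\mathbb{R}}\times\mathbb{R}$ ($\overline{\mathbb{R}}=\mathbb{R}\cup\{\pm\infty\}$), with values in the Riemann sphere $\overline{\mathbb{C}}$. Let $\Omega:=\overline{W(A)}\times\overline{W(B)}$ (closure of $W(A)$ in $\overline{\mathbb{R}}$) and $W_\Omega(T):=\bigcup_{n=1}^4\bigcup_{(\alpha,\beta)\in\Omega}r_n(\alpha,\beta)$.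 *)

theory Defs
  imports "HOL-Analysis.Analysis" "HOL-Library.Extended_Real"
begin

definition pquart :: "real \<Rightarrow> real \<Rightarrow> real \<Rightarrow> real \<Rightarrow> complex \<Rightarrow> complex" where
  "pquart c d \<alpha> \<beta> \<omega> =
     (complex_of_real \<alpha> - \<omega>^2) * (complex_of_real c - \<i> * complex_of_real d * \<omega> - \<omega>^2)
     - complex_of_real \<beta> * \<omega>^2"

text \<open>The Riemann sphere is modelled as complex option, None being the point infinity.
  Convergence of a complex sequence to a point of the sphere (chordal topology).\<close>
definition conv_sphere :: "(nat \<Rightarrow> complex) \<Rightarrow> complex option \<Rightarrow> bool" where
  "conv_sphere f z = (case z of
      None \<Rightarrow> filterlim (\<lambda>k. norm (f k)) at_top sequentially
    | Some w \<Rightarrow> f \<longlonglongrightarrow> w)"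

text \<open>For finite alpha these
  are the roots of p; for alpha = +/-infinity they are the limits of the continuously labelled
  roots as alpha tends to +/-infinity, i.e. the limits on the sphere of root sequences.\<close>
definition root_set :: "real \<Rightarrow> real \<Rightarrow> ereal \<Rightarrow> real \<Rightarrow> complex option set" where
  "root_set c d a \<beta> = (case a of
      ereal \<alpha> \<Rightarrow> Some ` {\<omega>. pquart c d \<alpha> \<beta> \<omega> = 0}
    | PInfty \<Rightarrow> {z. \<exists>as ws. filterlim as at_top sequentially \<and>
                          (\<forall>k. pquart c d (as k) \<beta> (ws k) = 0) \<and> conv_sphere ws z}
    | MInfty \<Rightarrow> {z. \<exists>as ws. filterlim as at_bot sequentially \<and>
                          (\<forall>k. pquart c d (as k) \<beta> (ws k) = 0) \<and> conv_sphere ws z})"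

text \<open>W_Omega(T), with Omega = closure of W(A) in the extended reals times closure of W(B).\<close>
definition W_Omega :: "real \<Rightarrow> real \<Rightarrow> real set \<Rightarrow> real set \<Rightarrow> complex option set" where
  "W_Omega c d WA WB = (\<Union>a \<in> closure (ereal ` WA). \<Union>\<beta> \<in> closure WB. root_set c d a \<beta>)"

end

theory Submission imports Defs "HOL-Computational_Algebra.Fundamental_Theorem_Algebra" begin

lemma poly_split:
  fixes p :: "complex poly"
  shows "\<exists>as. length as = degree p \<and> (\<forall>x. poly p x = lead_coeff p * (\<Prod>a\<leftarrow>as. x - a))"
proof (induction "degree p" arbitrary: p)
  case 0
  then obtain c where "p = [:c:]" by (metis degree_eq_zeroE)
  then show ?case by (intro exI[of _ "[]"]) auto
next
  case (Suc n p)
  have "\<not> constant (poly p)" using Suc(2) by (simp add: constant_degree)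
  from fundamental_theorem_of_algebra[OF this] obtain c where rt: "poly p c = 0" by auto
  hence "[:-c,1:] dvd p" by (simp add: dvd_iff_poly_eq_0)
  then obtain q where p: "p = [:-c,1:] * q" by (auto simp: dvd_def)
  have "q \<noteq> 0" using p Suc(2) by auto
  have "degree p = degree [:-c,1:] + degree q" unfolding p
    by (rule degree_mult_eq) (use \<open>q \<noteq> 0\<close> in auto)
  hence dq: "degree q = n" using Suc(2) by simp
  from Suc(1)[OF dq[symmetric]] obtain as where as: "length as = degree q"
     "\<forall>x. poly q x = lead_coeff q * (\<Prod>a\<leftarrow>as. x - a)" by auto
  have lc: "lead_coeff p = lead_coeff q" unfolding p lead_coeff_mult by simp
  show ?case
  proof (intro exI[of _ "c # as"] conjI allI)
    show "length (c#as) = degree p" using as dq Suc(2) by simp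
    fix x
    have "poly p x = (x - c) * poly q x" unfolding p by (simp add: algebra_simps)
    then show "poly p x = lead_coeff p * (\<Prod>a\<leftarrow>c#as. x - a)"
      using as(2) lc by (simp add: algebra_simps)
  qed
qed

lemma quartic_split:
  fixes a0 a1 a2 a3 :: complex
  shows "\<exists>r1 r2 r3 r4. \<forall>w. w^4 + a3*w^3 + a2*w^2 + a1*w + a0 = (w-r1)*(w-r2)*(w-r3)*(w-r4)"
proof -
  define P where "P = [:a0, a1, a2, a3, 1:]"
  have dP: "degree P = 4" "lead_coeff P = 1" unfolding P_def by (simp_all add: eval_nat_numeral)
  have ev: "poly P w = w^4 + a3*w^3 + a2*w^2 + a1*w + a0" for w
    unfolding P_def by (simp add: algebra_simps eval_nat_numeral)
  obtain as where as: "length as = 4" "\<forall>x. poly P x = (\<Prod>a\<leftarrow>as. x - a)"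
    using poly_split[of P] dP by auto
  then obtain r1 r2 r3 r4 where "as = [r1,r2,r3,r4]"
    by (auto simp: numeral_eq_Suc length_Suc_conv)
  thus ?thesis using as ev by (intro exI[of _ r1] exI[of _ r2] exI[of _ r3] exI[of _ r4]) (auto simp: algebra_simps)
qed

lemma quart_identity:
  fixes a cc dd b I w :: complex
  shows "(a - w^2)*(cc - I*dd*w - w^2) - b*w^2 = w^4 + (I*dd)*w^3 + (-(a+cc+b))*w^2 + (-I*a*dd)*w + a*cc"
  unfolding power2_eq_square power3_eq_cube power4_eq_xxxx by (simp add: algebra_simps)

lemma pquart_split: "\<exists>r1 r2 r3 r4. \<forall>w. pquart c d \<alpha> \<beta> w = (w-r1)*(w-r2)*(w-r3)*(w-r4)"
proof -
  define a where "a = complex_of_real \<alpha>"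
  define cc where "cc = complex_of_real c"
  define dd where "dd = complex_of_real d"
  define b where "b = complex_of_real \<beta>"
  obtain r1 r2 r3 r4 where h: "\<forall>w::complex. w^4 + (\<i>*dd)*w^3 + (-(a+cc+b))*w^2 + (-\<i>*a*dd)*w + a*cc = (w-r1)*(w-r2)*(w-r3)*(w-r4)"
    using quartic_split by blast
  have "pquart c d \<alpha> \<beta> w = w^4 + (\<i>*dd)*w^3 + (-(a+cc+b))*w^2 + (-\<i>*a*dd)*w + a*cc" for w :: complex
    unfolding pquart_def a_def [symmetric] cc_def [symmetric] dd_def [symmetric] b_def [symmetric]
    by (rule quart_identity)
  thus ?thesis using h by auto
qed


definition qq :: "real \<Rightarrow> real \<Rightarrow> complex \<Rightarrow> complex" where
  "qq c d w = complex_of_real c - \<i> * complex_of_real d * w - w^2"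

lemma pquart_qq: "pquart c d \<alpha> \<beta> w = (complex_of_real \<alpha> - w^2) * qq c d w - complex_of_real \<beta> * w^2"
  unfolding pquart_def qq_def by simp

lemma pquart_i: "pquart c d \<alpha> \<beta> \<i> = complex_of_real ((\<alpha>+1)*(c+d+1)+\<beta>)"
  unfolding pquart_def power2_eq_square by (simp add: algebra_simps)

lemma roots4:
  obtains r1 r2 r3 r4 where "\<And>w. pquart c d \<alpha> \<beta> w = (w-r1)*(w-r2)*(w-r3)*(w-r4)"
  using pquart_split by blast

lemma D_tendsto:
  assumes "filterlim (\<lambda>k. \<bar>as k\<bar>) at_top sequentially" "c \<ge> 0" "d > 0"
  shows "filterlim (\<lambda>k. norm (pquart c d (as k) \<beta> \<i>)) at_top sequentially"
proof (subst filterlim_at_top, intro allI)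
  fix M :: real
  have ev: "eventually (\<lambda>k. \<bar>as k\<bar> \<ge> \<bar>M\<bar> + \<bar>\<beta>\<bar> + (c+d+1)) sequentially"
    using assms(1) by (simp add: filterlim_at_top)
  show "eventually (\<lambda>k. norm (pquart c d (as k) \<beta> \<i>) \<ge> M) sequentially"
  proof (rule eventually_mono[OF ev])
    fix k assume h: "\<bar>as k\<bar> \<ge> \<bar>M\<bar> + \<bar>\<beta>\<bar> + (c+d+1)"
    have "\<bar>as k+1\<bar> * 1 \<le> \<bar>as k+1\<bar>*(c+d+1)" by (rule mult_left_mono) (use assms in auto)
    hence "\<bar>(as k + 1)*(c+d+1)\<bar> \<ge> \<bar>as k + 1\<bar>"
      using assms by (simp add: abs_mult)
    moreover have "\<bar>as k + 1\<bar> \<ge> \<bar>as k\<bar> - 1" by linarith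
    ultimately have "\<bar>(as k+1)*(c+d+1)+\<beta>\<bar> \<ge> M" using h assms by linarith
    thus "norm (pquart c d (as k) \<beta> \<i>) \<ge> M" by (simp only: pquart_i norm_of_real)
  qed
qed

lemma large_root:
  assumes "filterlim (\<lambda>k. \<bar>as k\<bar>) at_top sequentially" "c \<ge> 0" "d > 0"
  shows "\<exists>ws. (\<forall>k. pquart c d (as k) \<beta> (ws k) = 0) \<and> filterlim (\<lambda>k. norm (ws k)) at_top sequentially"
proof -
  define P where "P k r \<longleftrightarrow> pquart c d (as k) \<beta> r = 0 \<and> norm (pquart c d (as k) \<beta> \<i>) \<le> (1 + norm r)^4" for k r
  have ex: "\<exists>r. P k r" for k
  proof -
    obtain r1 r2 r3 r4 where f: "\<And>w. pquart c d (as k) \<beta> w = (w-r1)*(w-r2)*(w-r3)*(w-r4)"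
      using roots4 by blast
    define m where "m = Max {norm r1, norm r2, norm r3, norm r4}"
    have "m \<in> {norm r1, norm r2, norm r3, norm r4}" unfolding m_def by (rule Max_in) auto
    then obtain r where r: "r \<in> {r1,r2,r3,r4}" "norm r = m" by auto
    have le: "norm rj \<le> m" if "rj \<in> {r1,r2,r3,r4}" for rj
      unfolding m_def using that by (intro Max_ge) auto
    have m0: "0 \<le> m" by (meson insertI1 le norm_ge_zero order_trans)
    have b: "norm (\<i> - rj) \<le> 1 + m" if "rj \<in> {r1,r2,r3,r4}" for rj
      using norm_triangle_ineq4[of \<i> rj] le[OF that] by simp
    have "norm (pquart c d (as k) \<beta> \<i>) = norm (\<i>-r1) * norm (\<i>-r2) * norm (\<i>-r3) * norm (\<i>-r4)"
      by (simp add: f norm_mult)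
    also have "\<dots> \<le> (1+m)*(1+m)*(1+m)*(1+m)"
      using m0 by (intro mult_mono b) auto
    also have "\<dots> = (1 + norm r)^4" using r by (simp add: power4_eq_xxxx)
    finally have "norm (pquart c d (as k) \<beta> \<i>) \<le> (1 + norm r)^4" .
    moreover have "pquart c d (as k) \<beta> r = 0" using r f by auto
    ultimately show ?thesis unfolding P_def by blast
  qed
  define ws where "ws k = (SOME r. P k r)" for k
  have P: "P k (ws k)" for k unfolding ws_def using ex by (rule someI_ex)
  have D: "filterlim (\<lambda>k. norm (pquart c d (as k) \<beta> \<i>)) at_top sequentially"
    using D_tendsto[OF assms] .
  have "filterlim (\<lambda>k. norm (ws k)) at_top sequentially"
  proof (subst filterlim_at_top, intro allI)
    fix M :: real
    have ev: "eventually (\<lambda>k. norm (pquart c d (as k) \<beta> \<i>) \<ge> (1 + \<bar>M\<bar>)^4 + 1) sequentially"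
      using D by (simp add: filterlim_at_top)
    show "eventually (\<lambda>k. norm (ws k) \<ge> M) sequentially"
    proof (rule eventually_mono[OF ev])
      fix k assume h: "norm (pquart c d (as k) \<beta> \<i>) \<ge> (1 + \<bar>M\<bar>)^4 + 1"
      have "(1 + \<bar>M\<bar>)^4 < (1 + norm (ws k))^4" using h P[of k] unfolding P_def by linarith
      hence "1 + \<bar>M\<bar> < 1 + norm (ws k)"
        by (rule power_less_imp_less_base) simp
      thus "norm (ws k) \<ge> M" by linarith
    qed
  qed
  thus ?thesis using P unfolding P_def by blast
qed


lemma prod4_strict:
  fixes a1 a2 a3 a4 b1 b2 b3 b4 :: real
  assumes "b1 < a1" "b2 < a2" "b3 < a3" "b4 < a4" "0 \<le> b1" "0 \<le> b2" "0 \<le> b3" "0 \<le> b4"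
  shows "b1*b2*b3*b4 < a1*a2*a3*a4"
proof -
  have "b1*b2 < a1*a2" using assms by (intro mult_strict_mono) auto
  hence "b1*b2*b3 < a1*a2*a3" using assms by (intro mult_strict_mono) auto
  thus ?thesis using assms by (intro mult_strict_mono) auto
qed

lemma prod4_eq:
  fixes C y1 y2 y3 y4 :: real
  shows "(C*y1^4)*(C*y2^4)*(C*y3^4)*(C*y4^4) = (C*(y1*y2*y3*y4))^4"
        "(y1^4*C)*(y2^4*C)*(y3^4*C)*(y4^4*C) = (C*(y1*y2*y3*y4))^4"
  by (simp_all add: power4_eq_xxxx mult_ac)

lemma near_root:
  assumes "filterlim (\<lambda>k. \<bar>as k\<bar>) at_top sequentially" "c \<ge> 0" "d > 0" "qq c d z = 0"
  shows "\<exists>ws. (\<forall>k. pquart c d (as k) \<beta> (ws k) = 0) \<and> ws \<longlonglongrightarrow> z"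
proof -
  define C where "C = norm (pquart c d 0 \<beta> z)"
  have pz: "norm (pquart c d a \<beta> z) = C" for a
    unfolding C_def pquart_qq assms(4) by simp
  define D where "D k = norm (pquart c d (as k) \<beta> \<i>)" for k
  define P where "P k r \<longleftrightarrow> pquart c d (as k) \<beta> r = 0 \<and> norm (z - r)^4 * D k \<le> C * norm (\<i> - r)^4" for k r
  have ex: "\<exists>r. P k r" for k
  proof (rule ccontr)
    assume nex: "\<not> (\<exists>r. P k r)"
    obtain r1 r2 r3 r4 where f: "\<And>w. pquart c d (as k) \<beta> w = (w-r1)*(w-r2)*(w-r3)*(w-r4)"
      using roots4 by blast
    have lt: "C * norm (\<i> - rj)^4 < norm (z - rj)^4 * D k" if "rj \<in> {r1,r2,r3,r4}" for rj
    proof -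
      have "pquart c d (as k) \<beta> rj = 0" using that f by auto
      thus ?thesis using nex unfolding P_def by auto
    qed
    have C0: "0 \<le> C" unfolding C_def by simp
    have "(C * norm (\<i> - r1)^4) * (C * norm (\<i> - r2)^4) * (C * norm (\<i> - r3)^4) * (C * norm (\<i> - r4)^4)
       < (norm (z - r1)^4 * D k) * (norm (z - r2)^4 * D k) * (norm (z - r3)^4 * D k) * (norm (z - r4)^4 * D k)"
      by (rule prod4_strict) (use lt C0 in auto)
    moreover have "D k = norm (\<i>-r1) * norm (\<i>-r2) * norm (\<i>-r3) * norm (\<i>-r4)"
      unfolding D_def by (simp add: f norm_mult)
    moreover have "C = norm (z-r1) * norm (z-r2) * norm (z-r3) * norm (z-r4)"
      using pz[of "as k"] by (simp add: f norm_mult)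
    ultimately show False using prod4_eq[of C "norm (\<i> - r1)" "norm (\<i> - r2)" "norm (\<i> - r3)" "norm (\<i> - r4)"]
        prod4_eq[of "D k" "norm (z - r1)" "norm (z - r2)" "norm (z - r3)" "norm (z - r4)"]
      by (simp add: mult.commute)
  qed
  define ws where "ws k = (SOME r. P k r)" for k
  have P: "P k (ws k)" for k unfolding ws_def using ex by (rule someI_ex)
  have Dlim: "filterlim D at_top sequentially"
    unfolding D_def using D_tendsto[OF assms(1-3)] .
  have "ws \<longlonglongrightarrow> z"
  proof (rule tendstoI)
    fix e :: real assume e: "e > 0"
    define L where "L = norm (\<i> - z)"
    define \<eta> where "\<eta> = min (1/2) (e / (2*(L+1)))"
    have L0: "L \<ge> 0" unfolding L_def by simp
    have \<eta>0: "\<eta> > 0" unfolding \<eta>_def using e L0 by simp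
    have ev: "eventually (\<lambda>k. D k \<ge> C / \<eta>^4 + 1) sequentially"
      using Dlim by (simp add: filterlim_at_top)
    show "eventually (\<lambda>k. dist (ws k) z < e) sequentially"
    proof (rule eventually_mono[OF ev])
      fix k assume hk: "D k \<ge> C / \<eta>^4 + 1"
      define a where "a = norm (z - ws k)"
      define b where "b = norm (\<i> - ws k)"
      have a0: "a \<ge> 0" "b \<ge> 0" unfolding a_def b_def by simp_all
      have C0: "0 \<le> C" unfolding C_def by simp
      have Dpos: "D k > 0" using hk C0 \<eta>0 by (smt (verit) divide_nonneg_pos zero_less_power)
      have "C < \<eta>^4 * D k"
      proof -
        have "C / \<eta>^4 < D k" using hk by linarith
        thus ?thesis using \<eta>0 by (simp add: divide_less_eq mult.commute)
      qed
      have "a^4 * D k \<le> C * b^4" using P[of k] unfolding P_def a_def b_def by simp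
      also have "\<dots> \<le> (\<eta>^4 * D k) * b^4"
        using \<open>C < \<eta>^4 * D k\<close> a0 by (intro mult_right_mono) auto
      finally have "a^4 * D k \<le> ((\<eta> * b)^4) * D k" by (simp add: algebra_simps power_mult_distrib)
      hence "a^4 \<le> (\<eta> * b)^4" using Dpos by simp
      hence ab: "a \<le> \<eta> * b" using power_mono_iff[of a "\<eta> * b" 4] \<eta>0 a0 by simp
      have "b \<le> L + a" unfolding a_def b_def L_def using norm_triangle_ineq[of "\<i> - z" "z - ws k"] by simp
      hence "\<eta> * b \<le> \<eta> * (L + a)" using \<eta>0 by (intro mult_left_mono) auto
      hence "a \<le> \<eta> * L + \<eta> * a" using ab by (simp add: algebra_simps)
      moreover have "\<eta> * a \<le> a / 2"
      proof -
        have "\<eta> \<le> 1/2" unfolding \<eta>_def by (rule min.cobounded1)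
        thus ?thesis using mult_right_mono[of \<eta> "1/2" a] a0 by simp
      qed
      ultimately have "a \<le> 2 * \<eta> * L" by linarith
      also have "\<dots> \<le> 2 * (e / (2*(L+1))) * L" using L0 unfolding \<eta>_def
        by (intro mult_right_mono) auto
      also have "\<dots> < e" using e L0 by (simp add: field_simps)
      finally show "dist (ws k) z < e" unfolding a_def by (simp add: dist_norm norm_minus_commute)
    qed
  qed
  thus ?thesis using P unfolding P_def by blast
qed


lemma limit_root_qq:
  assumes "filterlim (\<lambda>k. \<bar>as k\<bar>) at_top sequentially"
    and "\<forall>k. pquart c d (as k) \<beta> (ws k) = 0" and "ws \<longlonglongrightarrow> w"
  shows "qq c d w = 0"
proof (rule ccontr)
  assume nz: "qq c d w \<noteq> 0"
  have ql: "(\<lambda>k. qq c d (ws k)) \<longlonglongrightarrow> qq c d w"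
    unfolding qq_def by (intro tendsto_intros assms(3))
  have ev: "eventually (\<lambda>k. qq c d (ws k) \<noteq> 0) sequentially"
    using tendsto_imp_eventually_ne[OF ql nz] .
  have ev2: "eventually (\<lambda>k. ws k ^ 2 + complex_of_real \<beta> * ws k ^ 2 / qq c d (ws k) = complex_of_real (as k)) sequentially"
  proof (rule eventually_mono[OF ev])
    fix k assume h: "qq c d (ws k) \<noteq> 0"
    have "(complex_of_real (as k) - ws k^2) * qq c d (ws k) = complex_of_real \<beta> * ws k ^ 2"
      using assms(2) unfolding pquart_qq by (simp add: algebra_simps)
    hence "complex_of_real (as k) - ws k^2 = complex_of_real \<beta> * ws k ^ 2 / qq c d (ws k)"
      using h by (simp add: field_simps)
    thus "ws k ^ 2 + complex_of_real \<beta> * ws k ^ 2 / qq c d (ws k) = complex_of_real (as k)"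
      by (simp add: algebra_simps)
  qed
  have "(\<lambda>k. ws k ^ 2 + complex_of_real \<beta> * ws k ^ 2 / qq c d (ws k)) \<longlonglongrightarrow> w^2 + complex_of_real \<beta> * w^2 / qq c d w"
    by (intro tendsto_intros assms(3) ql nz)
  hence t: "(\<lambda>k. complex_of_real (as k)) \<longlonglongrightarrow> w^2 + complex_of_real \<beta> * w^2 / qq c d w"
    using ev2 by (rule Lim_transform_eventually)
  have "filterlim (\<lambda>k. complex_of_real (as k)) at_infinity sequentially"
    by (rule filterlim_norm_at_top_imp_at_infinity) (use assms(1) in simp)
  thus False using not_tendsto_and_filterlim_at_infinity[OF sequentially_bot t]
    by auto
qed


lemma cl_iff: "x \<in> closure X \<longleftrightarrow> (\<forall>S. open S \<and> x \<in> S \<longrightarrow> S \<inter> X \<noteq> {})"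
proof
  assume "x \<in> closure X"
  thus "\<forall>S. open S \<and> x \<in> S \<longrightarrow> S \<inter> X \<noteq> {}" using open_Int_closure_eq_empty by blast
next
  assume h: "\<forall>S. open S \<and> x \<in> S \<longrightarrow> S \<inter> X \<noteq> {}"
  show "x \<in> closure X"
  proof (rule ccontr)
    assume "x \<notin> closure X"
    hence "open (- closure X) \<and> x \<in> - closure X" by auto
    with h have "(- closure X) \<inter> X \<noteq> {}" by blast
    thus False using closure_subset by blast
  qed
qed

lemma ereal_cl: "ereal x \<in> closure (ereal ` A) \<longleftrightarrow> x \<in> closure A"
proof
  assume h: "ereal x \<in> closure (ereal ` A)"
  show "x \<in> closure A"
  proof (rule ccontr)
    assume nx: "x \<notin> closure A"
    have "open (ereal ` (- closure A))" by (rule open_ereal) auto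
    moreover have "ereal x \<in> ereal ` (- closure A)" using nx by auto
    ultimately have "ereal ` (- closure A) \<inter> ereal ` A \<noteq> {}" using h cl_iff by blast
    thus False using closure_subset by auto
  qed
next
  assume h: "x \<in> closure A"
  show "ereal x \<in> closure (ereal ` A)"
  proof (subst cl_iff, intro allI impI)
    fix S :: "ereal set" assume S: "open S \<and> ereal x \<in> S"
    hence "open (ereal -` S) \<and> x \<in> ereal -` S" using open_ereal_vimage by auto
    hence "ereal -` S \<inter> A \<noteq> {}" using h cl_iff by blast
    thus "S \<inter> ereal ` A \<noteq> {}" by auto
  qed
qed

lemma pinf_cl: "PInfty \<in> closure (ereal ` A) \<longleftrightarrow> (\<forall>M. \<exists>a\<in>A. M < a)"
proof
  assume h: "PInfty \<in> closure (ereal ` A)"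
  show "\<forall>M. \<exists>a\<in>A. M < a"
  proof
    fix M
    have "open {ereal M<..} \<and> PInfty \<in> {ereal M<..}" by auto
    hence "{ereal M<..} \<inter> ereal ` A \<noteq> {}" using h unfolding cl_iff by blast
    then obtain a where "a \<in> A" "ereal a \<in> {ereal M<..}" by blast
    thus "\<exists>a\<in>A. M < a" by auto
  qed
next
  assume h: "\<forall>M. \<exists>a\<in>A. M < a"
  show "PInfty \<in> closure (ereal ` A)"
  proof (subst cl_iff, intro allI impI)
    fix S :: "ereal set" assume S: "open S \<and> PInfty \<in> S"
    then obtain x where x: "{ereal x<..} \<subseteq> S" using open_PInfty[of S] by auto
    obtain a where "a \<in> A" "x < a" using h by blast
    hence "ereal a \<in> S" "ereal a \<in> ereal ` A" using x by auto
    thus "S \<inter> ereal ` A \<noteq> {}" by blast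
  qed
qed

lemma minf_cl: "MInfty \<in> closure (ereal ` A) \<longleftrightarrow> (\<forall>M. \<exists>a\<in>A. a < M)"
proof
  assume h: "MInfty \<in> closure (ereal ` A)"
  show "\<forall>M. \<exists>a\<in>A. a < M"
  proof
    fix M
    have "open {..<ereal M} \<and> MInfty \<in> {..<ereal M}" by auto
    hence "{..<ereal M} \<inter> ereal ` A \<noteq> {}" using h unfolding cl_iff by blast
    then obtain a where "a \<in> A" "ereal a \<in> {..<ereal M}" by blast
    thus "\<exists>a\<in>A. a < M" by auto
  qed
next
  assume h: "\<forall>M. \<exists>a\<in>A. a < M"
  show "MInfty \<in> closure (ereal ` A)"
  proof (subst cl_iff, intro allI impI)
    fix S :: "ereal set" assume S: "open S \<and> MInfty \<in> S"
    then obtain x where x: "{..<ereal x} \<subseteq> S" using open_MInfty[of S] by auto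
    obtain a where "a \<in> A" "a < x" using h by blast
    hence "ereal a \<in> S" "ereal a \<in> ereal ` A" using x by auto
    thus "S \<inter> ereal ` A \<noteq> {}" by blast
  qed
qed

lemma unbounded_cl: "\<not> bounded (A::real set) \<longleftrightarrow> PInfty \<in> closure (ereal ` A) \<or> MInfty \<in> closure (ereal ` A)"
proof -
  have "bounded A \<longleftrightarrow> (\<exists>M. \<forall>a\<in>A. M \<ge> a) \<and> (\<exists>M. \<forall>a\<in>A. a \<ge> M)"
  proof
    assume "bounded A" then obtain B where "\<forall>x\<in>A. \<bar>x\<bar> \<le> B" by (auto simp: bounded_real)
    thus "(\<exists>M. \<forall>a\<in>A. M \<ge> a) \<and> (\<exists>M. \<forall>a\<in>A. a \<ge> M)"
    proof (intro conjI exI ballI)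
      fix a assume "a \<in> A"
      hence "\<bar>a\<bar> \<le> B" using \<open>\<forall>x\<in>A. \<bar>x\<bar> \<le> B\<close> by blast
      thus "B \<ge> a" "a \<ge> -B" by linarith+
    qed
  next
    assume "(\<exists>M. \<forall>a\<in>A. M \<ge> a) \<and> (\<exists>M. \<forall>a\<in>A. a \<ge> M)"
    then obtain M1 M2 where "\<forall>a\<in>A. M1 \<ge> a" "\<forall>a\<in>A. a \<ge> M2" by blast
    hence "\<forall>x\<in>A. \<bar>x\<bar> \<le> \<bar>M1\<bar> + \<bar>M2\<bar>"
    proof (intro ballI)
      fix x assume "x \<in> A"
      hence "M1 \<ge> x" "x \<ge> M2" using \<open>\<forall>a\<in>A. M1 \<ge> a\<close> \<open>\<forall>a\<in>A. a \<ge> M2\<close> by blast+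
      thus "\<bar>x\<bar> \<le> \<bar>M1\<bar> + \<bar>M2\<bar>" by linarith
    qed
    thus "bounded A" by (auto simp: bounded_real)
  qed
  thus ?thesis unfolding pinf_cl minf_cl by (auto simp: not_le)
qed


lemma abs_top_iff_aux:
  assumes "a = PInfty \<or> a = MInfty"
  shows "z \<in> root_set c d a \<beta> \<Longrightarrow> \<exists>as ws. filterlim (\<lambda>k. \<bar>as k\<bar>) at_top sequentially \<and>
            (\<forall>k. pquart c d (as k) \<beta> (ws k) = 0) \<and> conv_sphere ws z"
proof -
  assume z: "z \<in> root_set c d a \<beta>"
  show ?thesis
  proof (cases "a = PInfty")
    case True
    then obtain as ws where h: "filterlim as at_top sequentially" "\<forall>k. pquart c d (as k) \<beta> (ws k) = 0" "conv_sphere ws z"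
      using z by (auto simp: root_set_def)
    have "filterlim (\<lambda>k. \<bar>as k\<bar>) at_top sequentially"
      unfolding filterlim_at_top
    proof
      fix M show "eventually (\<lambda>k. \<bar>as k\<bar> \<ge> M) sequentially"
        using h(1) unfolding filterlim_at_top by (rule allE[of _ M]) (auto elim: eventually_mono)
    qed
    thus ?thesis using h by blast
  next
    case False
    hence "a = MInfty" using assms by auto
    then obtain as ws where h: "filterlim as at_bot sequentially" "\<forall>k. pquart c d (as k) \<beta> (ws k) = 0" "conv_sphere ws z"
      using z by (auto simp: root_set_def)
    have "filterlim (\<lambda>k. \<bar>as k\<bar>) at_top sequentially"
      unfolding filterlim_at_top
    proof
      fix M show "eventually (\<lambda>k. \<bar>as k\<bar> \<ge> M) sequentially"
        using h(1) unfolding filterlim_at_bot by (rule allE[of _ "-M"]) (auto elim: eventually_mono)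
    qed
    thus ?thesis using h by blast
  qed
qed

lemma rs_inf_intro:
  assumes "a = PInfty \<or> a = MInfty"
    and "\<And>as. filterlim (\<lambda>k. \<bar>as k\<bar>) at_top sequentially \<Longrightarrow>
          \<exists>ws. (\<forall>k. pquart c d (as k) \<beta> (ws k) = 0) \<and> conv_sphere ws z"
  shows "z \<in> root_set c d a \<beta>"
proof (cases "a = PInfty")
  case True
  have r: "filterlim (\<lambda>k. real k) at_top sequentially" by (rule filterlim_real_sequentially)
  have "filterlim (\<lambda>k. \<bar>real k\<bar>) at_top sequentially" using r by simp
  from assms(2)[OF this] obtain ws where "\<forall>k. pquart c d (real k) \<beta> (ws k) = 0" "conv_sphere ws z" by blast
  thus ?thesis using True r unfolding root_set_def by auto
next
  case False
  hence M: "a = MInfty" using assms by auto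
  have r: "filterlim (\<lambda>k. real k) at_top sequentially" by (rule filterlim_real_sequentially)
  have rb: "filterlim (\<lambda>k. - real k) at_bot sequentially"
    unfolding filterlim_at_bot
  proof
    fix M :: real
    show "eventually (\<lambda>k. - real k \<le> M) sequentially"
      using r unfolding filterlim_at_top by (rule allE[of _ "-M"]) (auto elim: eventually_mono)
  qed
  have "filterlim (\<lambda>k. \<bar>- real k\<bar>) at_top sequentially" using r by simp
  from assms(2)[OF this] obtain ws where "\<forall>k. pquart c d (- real k) \<beta> (ws k) = 0" "conv_sphere ws z" by blast
  thus ?thesis using M rb unfolding root_set_def by auto
qed

lemma inf_facts:
  assumes "a = PInfty \<or> a = MInfty" "c \<ge> 0" "d > 0"
  shows "Some w \<in> root_set c d a \<beta> \<Longrightarrow> qq c d w = 0"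
    and "qq c d z = 0 \<Longrightarrow> Some z \<in> root_set c d a \<beta>"
    and "None \<in> root_set c d a \<beta>"
proof -
  assume "Some w \<in> root_set c d a \<beta>"
  from abs_top_iff_aux[OF assms(1) this] obtain as ws where
    h: "filterlim (\<lambda>k. \<bar>as k\<bar>) at_top sequentially" "\<forall>k. pquart c d (as k) \<beta> (ws k) = 0" "conv_sphere ws (Some w)"
    by blast
  show "qq c d w = 0" by (rule limit_root_qq[OF h(1,2)]) (use h(3) in \<open>simp add: conv_sphere_def\<close>)
next
  assume q: "qq c d z = 0"
  show "Some z \<in> root_set c d a \<beta>"
    by (rule rs_inf_intro[OF assms(1)]) (use near_root[OF _ assms(2,3) q] in \<open>auto simp: conv_sphere_def\<close>)
next
  show "None \<in> root_set c d a \<beta>"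
    by (rule rs_inf_intro[OF assms(1)]) (use large_root[OF _ assms(2,3)] in \<open>auto simp: conv_sphere_def\<close>)
qed

lemma rs_fin: "z \<in> root_set c d (ereal x) \<beta> \<longleftrightarrow> (\<exists>w. z = Some w \<and> pquart c d x \<beta> w = 0)"
  by (auto simp: root_set_def)

lemma mem_W: "z \<in> W_Omega c d WA WB \<longleftrightarrow> (\<exists>a\<in>closure (ereal ` WA). \<exists>\<beta>\<in>closure WB. z \<in> root_set c d a \<beta>)"
  by (simp add: W_Omega_def)

lemma pquart_cnj: "pquart c d \<alpha> \<beta> (- cnj w) = cnj (pquart c d \<alpha> \<beta> w)"
  unfolding pquart_def by (simp add: algebra_simps)

lemma rs_sym:
  assumes "z \<in> root_set c d a \<beta>"
  shows "map_option (\<lambda>w. - cnj w) z \<in> root_set c d a \<beta>"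
proof -
  have cs: "conv_sphere (\<lambda>k. - cnj (ws k)) (map_option (\<lambda>w. - cnj w) z)" if "conv_sphere ws z" for ws
  proof (cases z)
    case None thus ?thesis using that by (simp add: conv_sphere_def)
  next
    case (Some w) thus ?thesis using that by (auto simp: conv_sphere_def intro!: tendsto_intros)
  qed
  have pz: "pquart c d x \<beta> (- cnj w) = 0 \<longleftrightarrow> pquart c d x \<beta> w = 0" for x w
    by (simp add: pquart_cnj)
  show ?thesis
  proof (cases a)
    case (real r) thus ?thesis using assms pz by (auto simp: root_set_def)
  next
    case PInf
    then obtain as ws where h: "filterlim as at_top sequentially" "\<forall>k. pquart c d (as k) \<beta> (ws k) = 0" "conv_sphere ws z"
      using assms by (auto simp: root_set_def)
    have "\<exists>as ws. filterlim as at_top sequentially \<and> (\<forall>k. pquart c d (as k) \<beta> (ws k) = 0) \<and> conv_sphere ws (map_option (\<lambda>w. - cnj w) z)"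
      by (intro exI[of _ as] exI[of _ "\<lambda>k. - cnj (ws k)"]) (use h cs pz in auto)
    thus ?thesis using PInf unfolding root_set_def by simp
  next
    case MInf
    then obtain as ws where h: "filterlim as at_bot sequentially" "\<forall>k. pquart c d (as k) \<beta> (ws k) = 0" "conv_sphere ws z"
      using assms by (auto simp: root_set_def)
    have "\<exists>as ws. filterlim as at_bot sequentially \<and> (\<forall>k. pquart c d (as k) \<beta> (ws k) = 0) \<and> conv_sphere ws (map_option (\<lambda>w. - cnj w) z)"
      by (intro exI[of _ as] exI[of _ "\<lambda>k. - cnj (ws k)"]) (use h cs pz in auto)
    thus ?thesis using MInf unfolding root_set_def by simp
  qed
qed

lemma qq_delta:
  assumes "t^2 = complex_of_real (c - d^2/4)"
  shows "qq c d (t - \<i> * complex_of_real (d/2)) = 0" "qq c d (- t - \<i> * complex_of_real (d/2)) = 0"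
  using assms unfolding qq_def power2_eq_square by (simp_all add: algebra_simps)


theorem proposition2p2:
  fixes c d :: real and WA WB :: "real set"
  assumes "c \<ge> 0" and "d > 0"
    and "WA \<noteq> {}" and "is_interval WA"
    and "WB \<noteq> {}" and "is_interval WB" and "bounded WB" and "WB \<noteq> {0}"
  defines "\<theta> \<equiv> csqrt (complex_of_real (c - d^2/4))"
  defines "\<delta>p \<equiv> \<theta> - \<i> * complex_of_real (d/2)"
  defines "\<delta>m \<equiv> - \<theta> - \<i> * complex_of_real (d/2)"
  shows "map_option (\<lambda>w. - cnj w) ` W_Omega c d WA WB = W_Omega c d WA WB
    \<and> (Some 0 \<in> W_Omega c d WA WB \<longleftrightarrow> (0 \<in> closure WA \<or> c = 0))
    \<and> (Some \<delta>p \<in> W_Omega c d WA WB \<longleftrightarrow> (\<not> bounded WA \<or> 0 \<in> closure WB \<or> c = 0))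
    \<and> (Some \<delta>m \<in> W_Omega c d WA WB \<longleftrightarrow> (\<not> bounded WA \<or> 0 \<in> closure WB))
    \<and> (None \<in> W_Omega c d WA WB \<longleftrightarrow> \<not> bounded WA)"
proof -
  let ?W = "W_Omega c d WA WB"
  let ?f = "\<lambda>w::complex. - cnj w"
  have th2: "\<theta>^2 = complex_of_real (c - d^2/4)" unfolding \<theta>_def by simp
  have qp: "qq c d \<delta>p = 0" and qm: "qq c d \<delta>m = 0"
    unfolding \<delta>p_def \<delta>m_def using qq_delta[OF th2] by auto
  have pdel: "pquart c d x \<beta> \<delta> = - complex_of_real \<beta> * \<delta>^2" if "qq c d \<delta> = 0" for x \<beta> \<delta>
    unfolding pquart_qq that by simp
  obtain \<beta>0 where \<beta>0: "\<beta>0 \<in> closure WB" using assms(5) closure_subset by blast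
  obtain x0 where x0: "ereal x0 \<in> closure (ereal ` WA)" using assms(3) closure_subset ereal_cl by blast
  have infcl: "\<not> bounded WA" if "a \<in> closure (ereal ` WA)" "a = PInfty \<or> a = MInfty" for a
    using that unbounded_cl by auto
  have unb: "\<exists>a\<in>closure (ereal ` WA). a = PInfty \<or> a = MInfty" if "\<not> bounded WA"
    using that unbounded_cl by auto
  have casesa: "P" if "a \<in> closure (ereal ` WA)" "\<And>x. a = ereal x \<Longrightarrow> x \<in> closure WA \<Longrightarrow> P"
     "a = PInfty \<or> a = MInfty \<Longrightarrow> \<not> bounded WA \<Longrightarrow> P" for a P
  proof (cases a)
    case (real r) thus ?thesis using that ereal_cl by auto
  next
    case PInf thus ?thesis using that infcl by auto
  next
    case MInf thus ?thesis using that infcl by auto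
  qed
  have sub: "map_option ?f ` ?W \<subseteq> ?W"
  proof
    fix y assume "y \<in> map_option ?f ` ?W"
    then obtain z where z: "z \<in> ?W" "y = map_option ?f z" by blast
    then obtain a \<beta> where "a \<in> closure (ereal ` WA)" "\<beta> \<in> closure WB" "z \<in> root_set c d a \<beta>"
      unfolding mem_W by blast
    thus "y \<in> ?W" unfolding mem_W z(2) using rs_sym by blast
  qed
  have "?W \<subseteq> map_option ?f ` ?W"
  proof
    fix z assume z: "z \<in> ?W"
    have "z = map_option ?f (map_option ?f z)" by (cases z) auto
    moreover have "map_option ?f z \<in> ?W" using sub z by blast
    ultimately show "z \<in> map_option ?f ` ?W" by blast
  qed
  with sub have i: "map_option ?f ` ?W = ?W" by blast
  have v: "None \<in> ?W \<longleftrightarrow> \<not> bounded WA"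
  proof
    assume "None \<in> ?W"
    then obtain a \<beta> where a: "a \<in> closure (ereal ` WA)" "None \<in> root_set c d a \<beta>" unfolding mem_W by blast
    show "\<not> bounded WA"
      by (rule casesa[OF a(1)]) (use a(2) rs_fin in auto)
  next
    assume "\<not> bounded WA"
    then obtain a where "a \<in> closure (ereal ` WA)" "a = PInfty \<or> a = MInfty" using unb by blast
    thus "None \<in> ?W" unfolding mem_W using inf_facts(3)[OF _ assms(1,2)] \<beta>0 by blast
  qed
  have p0: "pquart c d x \<beta> 0 = complex_of_real (x * c)" for x \<beta> unfolding pquart_def by simp
  have ii: "Some 0 \<in> ?W \<longleftrightarrow> (0 \<in> closure WA \<or> c = 0)"
  proof
    assume "Some 0 \<in> ?W"
    then obtain a \<beta> where a: "a \<in> closure (ereal ` WA)" "Some 0 \<in> root_set c d a \<beta>" unfolding mem_W by blast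
    show "0 \<in> closure WA \<or> c = 0"
    proof (rule casesa[OF a(1)])
      fix x assume "a = ereal x" "x \<in> closure WA"
      thus ?thesis using a(2) rs_fin p0 by auto
    next
      assume "a = PInfty \<or> a = MInfty"
      from inf_facts(1)[OF this assms(1,2) a(2)] show ?thesis by (simp add: qq_def)
    qed
  next
    assume h: "0 \<in> closure WA \<or> c = 0"
    show "Some 0 \<in> ?W"
    proof (cases "0 \<in> closure WA")
      case True
      hence "ereal 0 \<in> closure (ereal ` WA)" using ereal_cl by blast
      moreover have "Some 0 \<in> root_set c d (ereal 0) \<beta>0" by (simp add: rs_fin p0)
      ultimately show ?thesis unfolding mem_W using \<beta>0 by blast
    next
      case False
      hence "c = 0" using h by blast
      hence "Some 0 \<in> root_set c d (ereal x0) \<beta>0" using p0[of x0 \<beta>0] by (auto simp: rs_fin)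
      thus ?thesis unfolding mem_W using \<beta>0 x0 by blast
    qed
  qed
  have iii: "Some \<delta>p \<in> ?W \<longleftrightarrow> (\<not> bounded WA \<or> 0 \<in> closure WB \<or> c = 0)"
  proof
    assume "Some \<delta>p \<in> ?W"
    then obtain a \<beta> where a: "a \<in> closure (ereal ` WA)" "\<beta> \<in> closure WB" "Some \<delta>p \<in> root_set c d a \<beta>" unfolding mem_W by blast
    show "\<not> bounded WA \<or> 0 \<in> closure WB \<or> c = 0"
    proof (rule casesa[OF a(1)])
      fix x assume "a = ereal x" "x \<in> closure WA"
      hence "- complex_of_real \<beta> * \<delta>p^2 = 0" using a(3) rs_fin pdel[OF qp] by auto
      hence "\<beta> = 0 \<or> \<delta>p = 0" by auto
      moreover have "\<delta>p = 0 \<Longrightarrow> c = 0" using qp by (simp add: qq_def)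
      ultimately show ?thesis using a(2) by auto
    qed auto
  next
    assume h: "\<not> bounded WA \<or> 0 \<in> closure WB \<or> c = 0"
    show "Some \<delta>p \<in> ?W"
    proof -
      consider "\<not> bounded WA" | "0 \<in> closure WB" | "c = 0" using h by blast
      thus ?thesis
      proof cases
        case 1
        then obtain a where "a \<in> closure (ereal ` WA)" "a = PInfty \<or> a = MInfty" using unb by blast
        thus ?thesis unfolding mem_W using inf_facts(2)[OF _ assms(1,2) qp] \<beta>0 by blast
      next
        case 2
        have "Some \<delta>p \<in> root_set c d (ereal x0) 0" by (simp add: rs_fin pdel[OF qp])
        thus ?thesis unfolding mem_W using x0 2 by blast
      next
        case 3
        have sq: "sqrt (d^2/4) = d/2"
          by (rule real_sqrt_unique) (use assms(2) in \<open>auto simp: power2_eq_square\<close>)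
        have "\<theta> = \<i> * complex_of_real (sqrt \<bar>Re (complex_of_real (c - d^2/4))\<bar>)"
          unfolding \<theta>_def using 3 by (intro csqrt_of_real_nonpos) auto
        hence "\<theta> = \<i> * complex_of_real (d/2)" using 3 sq by simp
        hence "\<delta>p = 0" unfolding \<delta>p_def by simp
        thus ?thesis using ii 3 by simp
      qed
    qed
  qed
  have iv: "Some \<delta>m \<in> ?W \<longleftrightarrow> (\<not> bounded WA \<or> 0 \<in> closure WB)"
  proof
    assume "Some \<delta>m \<in> ?W"
    then obtain a \<beta> where a: "a \<in> closure (ereal ` WA)" "\<beta> \<in> closure WB" "Some \<delta>m \<in> root_set c d a \<beta>" unfolding mem_W by blast
    show "\<not> bounded WA \<or> 0 \<in> closure WB"
    proof (rule casesa[OF a(1)])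
      fix x assume "a = ereal x" "x \<in> closure WA"
      hence "- complex_of_real \<beta> * \<delta>m^2 = 0" using a(3) rs_fin pdel[OF qm] by auto
      hence "\<beta> = 0 \<or> \<delta>m = 0" by auto
      moreover have "\<delta>m \<noteq> 0"
      proof
        assume "\<delta>m = 0"
        moreover have "\<theta> = - \<delta>m - \<i> * complex_of_real (d/2)" unfolding \<delta>m_def by simp
        ultimately have "\<theta> = - (\<i> * complex_of_real (d/2))" by simp
        hence "Re \<theta> = 0" "Im \<theta> < 0" using assms(2) by auto
        moreover have "0 < Re \<theta> \<or> Re \<theta> = 0 \<and> 0 \<le> Im \<theta>" unfolding \<theta>_def by (rule csqrt_principal)
        ultimately show False by linarith
      qed
      ultimately show ?thesis using a(2) by auto
    qed auto
  next
    assume h: "\<not> bounded WA \<or> 0 \<in> closure WB"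
    show "Some \<delta>m \<in> ?W"
    proof -
      consider "\<not> bounded WA" | "0 \<in> closure WB" using h by blast
      thus ?thesis
      proof cases
        case 1
        then obtain a where "a \<in> closure (ereal ` WA)" "a = PInfty \<or> a = MInfty" using unb by blast
        thus ?thesis unfolding mem_W using inf_facts(2)[OF _ assms(1,2) qm] \<beta>0 by blast
      next
        case 2
        have "Some \<delta>m \<in> root_set c d (ereal x0) 0" by (simp add: rs_fin pdel[OF qm])
        thus ?thesis unfolding mem_W using x0 2 by blast
      qed
    qed
  qed
  show ?thesis using i ii iii iv v by blast
qed

end
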